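(* Let $f$ be one of $G_3,G_4,G_5,G_6,G^{\#}_{10}$, and let $\widehat p_0,\dots,\widehat p_4$ be a normalized configuration of 5 distinct points on the unit sphere $S^2$ that minimizes the energy $\sum_{i<j}f(\|\widehat p_i-\widehat p_j\|)$ among all 5-point configurations on $S^2$. Then $\|\widehat p_4-\widehat p_0\|>1/2$ and $\|\widehat p_4-\widehat p_i\|>4/\sqrt{13}$ for $i=1,2,3$.
   Context: $G_k(r)=(4-r^2)^k$ and $G^{\#}_{10}=G_{10}+28G_5+102G_2$. A configuration $\widehat p_0,\dots,\widehat p_4$ on $S^2$ is normalized if $\widehat p_4=(0,0,1)$ and $\|\widehat p_4-\widehat p_0\|\le\|\widehat p_4-\widehat p_i\|$ for all $i\in\{1,2,3\}$. *)

theory Defs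
  imports "HOL-Analysis.Analysis"
begin

definition G :: "nat \<Rightarrow> real \<Rightarrow> real" where
  "G k r = (4 - r\<^sup>2) ^ k"

definition G10sharp :: "real \<Rightarrow> real" where
  "G10sharp r = G 10 r + 28 * G 5 r + 102 * G 2 r"

definition S2 :: "(real^3) set" where
  "S2 = sphere 0 1"

definition config5 :: "(nat \<Rightarrow> real^3) \<Rightarrow> bool" where
  "config5 p \<longleftrightarrow> (\<forall>i<5. p i \<in> S2)"

definition energy :: "(real \<Rightarrow> real) \<Rightarrow> (nat \<Rightarrow> real^3) \<Rightarrow> real" where
  "energy f p = (\<Sum>j<5. \<Sum>i<j. f (norm (p i - p j)))"

definition north :: "real^3" where
  "north = vector [0, 0, 1]"

definition normalized :: "(nat \<Rightarrow> real^3) \<Rightarrow> bool" where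
  "normalized p \<longleftrightarrow> p 4 = north \<and>
     (\<forall>i\<in>{1,2,3}. norm (p 4 - p 0) \<le> norm (p 4 - p i))"

definition minimizer :: "(real \<Rightarrow> real) \<Rightarrow> (nat \<Rightarrow> real^3) \<Rightarrow> bool" where
  "minimizer f p \<longleftrightarrow> config5 p \<and> (\<forall>q. config5 q \<longrightarrow> energy f p \<le> energy f q)"

end

theory Submission
  imports Defs
begin

lemma G_inner:
  assumes "norm x = 1" "norm (y::real^3) = 1"
  shows "G k (norm (x - y)) = (2 + 2 * (x \<bullet> y)) ^ k"
proof -
  have "x \<bullet> y = (1 + 1 - (norm (x - y))\<^sup>2) / 2" using dot_norm_neg[of x y] assms by simp
  then have e: "4 - (norm (x - y))\<^sup>2 = 2 + 2 * (x \<bullet> y)" by simp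
  show ?thesis unfolding G_def e by (rule refl)
qed

lemma inner_bounds:
  assumes "norm x = 1" "norm (y::real^3) = 1"
  shows "0 \<le> 2 + 2 * (x \<bullet> y)"
proof -
  have "\<bar>x \<bullet> y\<bar> \<le> 1" using Cauchy_Schwarz_ineq2[of x y] assms by simp
  then show ?thesis by linarith
qed

lemma energy_expand:
  "energy f p = f (norm (p 0 - p 1)) + f (norm (p 0 - p 2)) + f (norm (p 1 - p 2))
     + f (norm (p 0 - p 3)) + f (norm (p 1 - p 3)) + f (norm (p 2 - p 3))
     + f (norm (p 0 - p 4)) + f (norm (p 1 - p 4)) + f (norm (p 2 - p 4)) + f (norm (p 3 - p 4))"
  by (simp add: energy_def eval_nat_numeral lessThan_Suc)

lemma sum_pairs:
  fixes a b c d e :: "real^3"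
  assumes "norm a = 1" "norm b = 1" "norm c = 1" "norm d = 1" "norm e = 1"
  shows "(2+2*(a\<bullet>b)) + (2+2*(a\<bullet>c)) + (2+2*(b\<bullet>c)) + (2+2*(a\<bullet>d)) + (2+2*(b\<bullet>d))
     + (2+2*(c\<bullet>d)) + (2+2*(a\<bullet>e)) + (2+2*(b\<bullet>e)) + (2+2*(c\<bullet>e)) + (2+2*(d\<bullet>e)) \<ge> 15"
proof -
  have n: "x \<bullet> x = 1" if "norm x = 1" for x :: "real^3" using that by (simp add: dot_square_norm)
  have "0 \<le> (a+b+c+d+e) \<bullet> (a+b+c+d+e)" by simp
  also have "\<dots> = a\<bullet>a + b\<bullet>b + c\<bullet>c + d\<bullet>d + e\<bullet>e + 2*(a\<bullet>b + a\<bullet>c + b\<bullet>c + a\<bullet>d + b\<bullet>d + c\<bullet>d + a\<bullet>e + b\<bullet>e + c\<bullet>e + d\<bullet>e)"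
    by (simp add: inner_add_left inner_add_right inner_commute algebra_simps)
  finally show ?thesis using n assms by simp
qed

definition tbp :: "nat \<Rightarrow> real^3" where
  "tbp i = [vector [0,0,-1], vector [1,0,0], vector [-1/2, sqrt 3/2, 0],
            vector [-1/2, - sqrt 3/2, 0], north] ! i"

lemma tbp_vals:
  "tbp 0 = vector [0,0,-1]" "tbp 1 = vector [1,0,0]" "tbp 2 = vector [-1/2, sqrt 3/2, 0]"
  "tbp 3 = vector [-1/2, - sqrt 3/2, 0]" "tbp 4 = vector [0,0,1]" "tbp (Suc 0) = vector [1,0,0]"
  by (simp_all add: tbp_def north_def numeral_eq_Suc)

lemma inner3: "(vector [a,b,c] :: real^3) \<bullet> vector [d,e,g] = a*d + b*e + c*g"
  by (simp add: inner_vec_def sum_3)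

lemma norm3: "norm (vector [a,b,c] :: real^3) = sqrt (a*a+b*b+c*c)"
  by (simp add: norm_eq_sqrt_inner inner3)

lemma tbp_norm: "i < 5 \<Longrightarrow> norm (tbp i) = 1"
proof -
  assume "i < 5"
  then have "i = 0 \<or> i = 1 \<or> i = 2 \<or> i = 3 \<or> i = 4" by auto
  moreover have "sqrt 3 * sqrt 3 = 3" by simp
  ultimately show ?thesis by (auto simp: tbp_vals norm3 algebra_simps)
qed

lemma tbp_config: "config5 tbp"
  using tbp_norm by (simp add: config5_def S2_def)

lemma s3: "sqrt 3 * sqrt 3 = (3::real)" by simp

lemma tbp_energy_G:
  assumes "k \<ge> 1"
  shows "energy (G k) tbp = 6 * 2^k + 3"
proof -
  have [simp]: "(0::real)^k = 0" using assms by simp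
  have g: "G k (norm (tbp i - tbp j)) = (2+2*(tbp i \<bullet> tbp j))^k" if "i<5" "j<5" for i j
    using G_inner[OF tbp_norm[OF that(1)] tbp_norm[OF that(2)]] .
  have g01: "G k (norm (tbp 0 - tbp 1)) = (2+2*(tbp 0 \<bullet> tbp 1))^k" by (rule g) simp_all
  have g02: "G k (norm (tbp 0 - tbp 2)) = (2+2*(tbp 0 \<bullet> tbp 2))^k" by (rule g) simp_all
  have g12: "G k (norm (tbp 1 - tbp 2)) = (2+2*(tbp 1 \<bullet> tbp 2))^k" by (rule g) simp_all
  have g03: "G k (norm (tbp 0 - tbp 3)) = (2+2*(tbp 0 \<bullet> tbp 3))^k" by (rule g) simp_all
  have g13: "G k (norm (tbp 1 - tbp 3)) = (2+2*(tbp 1 \<bullet> tbp 3))^k" by (rule g) simp_all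
  have g23: "G k (norm (tbp 2 - tbp 3)) = (2+2*(tbp 2 \<bullet> tbp 3))^k" by (rule g) simp_all
  have g04: "G k (norm (tbp 0 - tbp 4)) = (2+2*(tbp 0 \<bullet> tbp 4))^k" by (rule g) simp_all
  have g14: "G k (norm (tbp 1 - tbp 4)) = (2+2*(tbp 1 \<bullet> tbp 4))^k" by (rule g) simp_all
  have g24: "G k (norm (tbp 2 - tbp 4)) = (2+2*(tbp 2 \<bullet> tbp 4))^k" by (rule g) simp_all
  have g34: "G k (norm (tbp 3 - tbp 4)) = (2+2*(tbp 3 \<bullet> tbp 4))^k" by (rule g) simp_all
  show ?thesis
    unfolding energy_expand
    apply (simp only: g01 g02 g12 g03 g13 g23 g04 g14 g24 g34)
    apply (simp add: tbp_vals inner3 s3)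
    done
qed

lemma tbp_energy_G10: "energy G10sharp tbp = 14361"
proof -
  have "energy G10sharp tbp = energy (G 10) tbp + 28 * energy (G 5) tbp + 102 * energy (G 2) tbp"
    by (simp add: energy_expand G10sharp_def algebra_simps)
  then show ?thesis by (simp add: tbp_energy_G)
qed

lemma A_eq:
  assumes "norm x = 1" "norm (y::real^3) = 1"
  shows "2 + 2 * (x \<bullet> y) = 4 - (norm (x - y))\<^sup>2"
  using dot_norm_neg[of x y] assms by simp

lemma sq_le_aux:
  assumes "0 \<le> n" "n \<le> 4 / sqrt 13"
  shows "n\<^sup>2 \<le> 16/13"
proof -
  have "n\<^sup>2 \<le> (4 / sqrt 13)\<^sup>2" using power_mono[OF assms(2) assms(1)] .
  also have "\<dots> = 16/13" by (simp add: power_divide)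
  finally show ?thesis .
qed

lemma core:
  fixes p :: "nat \<Rightarrow> real^3" and f :: "real \<Rightarrow> real" and H :: "real \<Rightarrow> real" and E :: real
  assumes fH: "\<And>x y. norm x = 1 \<Longrightarrow> norm (y::real^3) = 1 \<Longrightarrow> f (norm (x - y)) = H (2 + 2 * (x \<bullet> y))"
    and E: "energy f tbp \<le> E"
    and P1: "\<And>x b1 b2 b3 b4 b5 b6 b7 b8 b9. x \<ge> 15/4 \<Longrightarrow> b1 \<ge> 0 \<Longrightarrow> b2 \<ge> 0 \<Longrightarrow> b3 \<ge> 0
       \<Longrightarrow> b4 \<ge> 0 \<Longrightarrow> b5 \<ge> 0 \<Longrightarrow> b6 \<ge> 0 \<Longrightarrow> b7 \<ge> 0 \<Longrightarrow> b8 \<ge> 0 \<Longrightarrow> b9 \<ge> 0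
       \<Longrightarrow> H x + H b1 + H b2 + H b3 + H b4 + H b5 + H b6 + H b7 + H b8 + H b9 > E"
    and P2: "\<And>x y b1 b2 b3 b4 b5 b6 b7 b8. x \<ge> 36/13 \<Longrightarrow> y \<ge> 36/13 \<Longrightarrow> b1 \<ge> 0 \<Longrightarrow> b2 \<ge> 0 \<Longrightarrow> b3 \<ge> 0
       \<Longrightarrow> b4 \<ge> 0 \<Longrightarrow> b5 \<ge> 0 \<Longrightarrow> b6 \<ge> 0 \<Longrightarrow> b7 \<ge> 0 \<Longrightarrow> b8 \<ge> 0
       \<Longrightarrow> x + y + b1 + b2 + b3 + b4 + b5 + b6 + b7 + b8 \<ge> 15
       \<Longrightarrow> H x + H y + H b1 + H b2 + H b3 + H b4 + H b5 + H b6 + H b7 + H b8 > E"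
    and cp: "config5 p" and np: "normalized p" and mp: "minimizer f p"
  shows "norm (p 4 - p 0) > 1/2 \<and> (\<forall>i\<in>{1,2,3}. norm (p 4 - p i) > 4 / sqrt 13)"
proof -
  have n: "norm (p i) = 1" if "i < 5" for i using cp that by (simp add: config5_def S2_def)
  note n0 = n[of 0, simplified] and n1 = n[of 1, simplified] and n2 = n[of 2, simplified]
    and n3 = n[of 3, simplified] and n4 = n[of 4, simplified]
  define A where "A i j = 2 + 2 * (p i \<bullet> p j)" for i j
  have en: "energy f p = H (A 0 1) + H (A 0 2) + H (A 1 2) + H (A 0 3) + H (A 1 3) + H (A 2 3)
     + H (A 0 4) + H (A 1 4) + H (A 2 4) + H (A 3 4)"
    unfolding energy_expand A_def using n0 n1 n2 n3 n4 by (simp add: fH)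
  have le: "energy f p \<le> E" using mp tbp_config E unfolding minimizer_def by force
  have nn: "A i j \<ge> 0" if "i < 5" "j < 5" for i j
    unfolding A_def using inner_bounds n that by blast
  have s15: "A 0 1 + A 0 2 + A 1 2 + A 0 3 + A 1 3 + A 2 3 + A 0 4 + A 1 4 + A 2 4 + A 3 4 \<ge> 15"
    unfolding A_def using sum_pairs[OF n0 n1 n2 n3 n4] by simp
  have Ad: "A j 4 = 4 - (norm (p 4 - p j))\<^sup>2" if "j < 5" for j
    unfolding A_def using A_eq[OF n[OF that] n4] by (simp add: norm_minus_commute)
  have close: "A j 4 \<ge> 36/13" if "j < 5" "norm (p 4 - p j) \<le> 4 / sqrt 13" for j
    using sq_le_aux[OF norm_ge_zero that(2)] Ad[OF that(1)] by simp
  have part1: "norm (p 4 - p 0) > 1/2"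
  proof (rule ccontr)
    assume "\<not> ?thesis"
    then have "norm (p 4 - p 0) \<le> 1/2" by simp
    then have "(norm (p 4 - p 0))\<^sup>2 \<le> (1/2)\<^sup>2" by (rule power_mono) simp
    then have "A 0 4 \<ge> 15/4" using Ad[of 0] by (simp add: power_divide)
    from P1[OF this, of "A 0 1" "A 0 2" "A 1 2" "A 0 3" "A 1 3" "A 2 3" "A 1 4" "A 2 4" "A 3 4"]
    show False using nn en le by simp
  qed
  have part2: "norm (p 4 - p i) > 4 / sqrt 13" if i: "i \<in> {1,2,3}" for i
  proof (rule ccontr)
    assume "\<not> ?thesis"
    then have c: "norm (p 4 - p i) \<le> 4 / sqrt 13" by simp
    then have c0: "norm (p 4 - p 0) \<le> 4 / sqrt 13" using np i unfolding normalized_def by force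
    have x: "A 0 4 \<ge> 36/13" using close[OF _ c0] by simp
    have y: "A i 4 \<ge> 36/13" using close[OF _ c] i by auto
    show False
    proof -
      consider "i = 1" | "i = 2" | "i = 3" using i by auto
      then show False
      proof cases
        case 1
        from P2[OF x y[unfolded 1], of "A 0 1" "A 0 2" "A 1 2" "A 0 3" "A 1 3" "A 2 3" "A 2 4" "A 3 4"]
        show False using nn en le s15 by simp
      next
        case 2
        from P2[OF x y[unfolded 2], of "A 0 1" "A 0 2" "A 1 2" "A 0 3" "A 1 3" "A 2 3" "A 1 4" "A 3 4"]
        show False using nn en le s15 by simp
      next
        case 3
        from P2[OF x y[unfolded 3], of "A 0 1" "A 0 2" "A 1 2" "A 0 3" "A 1 3" "A 2 3" "A 1 4" "A 2 4"]
        show False using nn en le s15 by simp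
      qed
    qed
  qed
  show ?thesis using part1 part2 by blast
qed


lemma cube_tan: "b \<ge> 0 \<Longrightarrow> (b::real)^3 \<ge> 108/25*b - 432/125"
proof -
  assume "b \<ge> 0"
  have "b^3 - (108/25*b - 432/125) = (b-6/5)^2*(b+12/5)" by algebra
  also have "\<dots> \<ge> 0" using \<open>b \<ge> 0\<close> by simp
  finally show ?thesis by simp
qed

lemma cube_big: "x \<ge> 36/13 \<Longrightarrow> (x::real)^3 \<ge> 108/25*x + (46656/2197 - 108/25*(36/13))"
proof -
  assume h: "x \<ge> 36/13"
  have "x^3 - (108/25*x + (46656/2197 - 108/25*(36/13))) = (x - 36/13)*(x*x + x*(36/13) + (36/13)*(36/13) - 108/25)"
    by algebra
  also have "\<dots> \<ge> 0"
  proof (rule mult_nonneg_nonneg)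
    show "0 \<le> x - 36/13" using h by simp
    have "x*x \<ge> (36/13)*(36/13)" using h by (intro mult_mono) auto
    moreover have "x*(36/13) \<ge> (36/13)*(36/13)" using h by simp
    ultimately show "0 \<le> x*x + x*(36/13) + (36/13)*(36/13) - 108/25" by simp
  qed
  finally show ?thesis by simp
qed

lemma P2_3:
  assumes "x \<ge> 36/13" "y \<ge> 36/13" "b1 \<ge> 0" "b2 \<ge> 0" "b3 \<ge> 0" "b4 \<ge> 0" "b5 \<ge> 0" "b6 \<ge> 0" "b7 \<ge> 0" "b8 \<ge> 0" "x + y + b1 + b2 + b3 + b4 + b5 + b6 + b7 + b8 \<ge> 15"
  shows "(6 * 2^3 + 3 :: real) < x^3 + y^3 + b1^3 + b2^3 + b3^3 + b4^3 + b5^3 + b6^3 + b7^3 + b8^3"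
proof -
  have e: "(6 * 2^3 + 3 :: real) = 51" by simp
  show ?thesis unfolding e using cube_big[OF assms(1)] cube_big[OF assms(2)] cube_tan[OF assms(3)] cube_tan[OF assms(4)] cube_tan[OF assms(5)] cube_tan[OF assms(6)] cube_tan[OF assms(7)] cube_tan[OF assms(8)] cube_tan[OF assms(9)] cube_tan[OF assms(10)] assms(11) by linarith
qed

lemma P1_gen:
  assumes k: "k \<in> {3,4,5,6}" and x: "x \<ge> 15/4" and "b1 \<ge> 0" "b2 \<ge> 0" "b3 \<ge> 0" "b4 \<ge> 0" "b5 \<ge> 0" "b6 \<ge> 0" "b7 \<ge> 0" "b8 \<ge> 0" "b9 \<ge> 0"
  shows "(6 * 2^k + 3 :: real) < x^k + b1^k + b2^k + b3^k + b4^k + b5^k + b6^k + b7^k + b8^k + b9^k"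
proof -
  have "x^k \<ge> (15/4)^k" using x by (intro power_mono) auto
  moreover have "(15/4)^k > (6 * 2^k + 3 :: real)" using k by (auto simp: power_divide)
  ultimately show ?thesis using zero_le_power[OF assms(3), of k] zero_le_power[OF assms(4), of k] zero_le_power[OF assms(5), of k] zero_le_power[OF assms(6), of k] zero_le_power[OF assms(7), of k] zero_le_power[OF assms(8), of k] zero_le_power[OF assms(9), of k] zero_le_power[OF assms(10), of k] zero_le_power[OF assms(11), of k] by linarith
qed

lemma P2_gen:
  assumes k: "k \<in> {4,5,6}" and x: "x \<ge> 36/13" and y: "y \<ge> 36/13" and "b1 \<ge> 0" "b2 \<ge> 0" "b3 \<ge> 0" "b4 \<ge> 0" "b5 \<ge> 0" "b6 \<ge> 0" "b7 \<ge> 0" "b8 \<ge> 0"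
  shows "(6 * 2^k + 3 :: real) < x^k + y^k + b1^k + b2^k + b3^k + b4^k + b5^k + b6^k + b7^k + b8^k"
proof -
  have "x^k \<ge> (36/13)^k" using x by (intro power_mono) auto
  moreover have "y^k \<ge> (36/13)^k" using y by (intro power_mono) auto
  moreover have "2*(36/13)^k > (6 * 2^k + 3 :: real)" using k by (auto simp: power_divide)
  ultimately show ?thesis using zero_le_power[OF assms(4), of k] zero_le_power[OF assms(5), of k] zero_le_power[OF assms(6), of k] zero_le_power[OF assms(7), of k] zero_le_power[OF assms(8), of k] zero_le_power[OF assms(9), of k] zero_le_power[OF assms(10), of k] zero_le_power[OF assms(11), of k] by linarith
qed

definition h10 :: "real \<Rightarrow> real" where "h10 a = a^10 + 28*a^5 + 102*a^2"

lemma h10_nn: "a \<ge> 0 \<Longrightarrow> h10 a \<ge> 0" by (simp add: h10_def)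

lemma h10_ge: "a \<ge> c \<Longrightarrow> c \<ge> 0 \<Longrightarrow> h10 a \<ge> c^10"
proof -
  assume "a \<ge> c" "c \<ge> 0"
  then have "a^10 \<ge> c^10" "a \<ge> 0" by (auto intro: power_mono)
  then show ?thesis using zero_le_power[OF \<open>a \<ge> 0\<close>, of 5] zero_le_power2[of a] unfolding h10_def by linarith
qed

lemma P1_10:
  assumes x: "x \<ge> 15/4" and "b1 \<ge> 0" "b2 \<ge> 0" "b3 \<ge> 0" "b4 \<ge> 0" "b5 \<ge> 0" "b6 \<ge> 0" "b7 \<ge> 0" "b8 \<ge> 0" "b9 \<ge> 0"
  shows "(14361::real) < h10 x + h10 b1 + h10 b2 + h10 b3 + h10 b4 + h10 b5 + h10 b6 + h10 b7 + h10 b8 + h10 b9"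
proof -
  have "h10 x \<ge> (15/4)^10" using h10_ge[OF x] by simp
  moreover have "(15/4::real)^10 > 14361" by (simp add: power_divide)
  ultimately show ?thesis using h10_nn[OF assms(2)] h10_nn[OF assms(3)] h10_nn[OF assms(4)] h10_nn[OF assms(5)] h10_nn[OF assms(6)] h10_nn[OF assms(7)] h10_nn[OF assms(8)] h10_nn[OF assms(9)] h10_nn[OF assms(10)] by linarith
qed

lemma P2_10:
  assumes x: "x \<ge> 36/13" and y: "y \<ge> 36/13" and "b1 \<ge> 0" "b2 \<ge> 0" "b3 \<ge> 0" "b4 \<ge> 0" "b5 \<ge> 0" "b6 \<ge> 0" "b7 \<ge> 0" "b8 \<ge> 0"
  shows "(14361::real) < h10 x + h10 y + h10 b1 + h10 b2 + h10 b3 + h10 b4 + h10 b5 + h10 b6 + h10 b7 + h10 b8"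
proof -
  have "h10 x \<ge> (36/13)^10" using h10_ge[OF x] by simp
  moreover have "(36/13::real)^10 > 14361" by (simp add: power_divide)
  ultimately show ?thesis using h10_nn[of y] y h10_nn[OF assms(3)] h10_nn[OF assms(4)] h10_nn[OF assms(5)] h10_nn[OF assms(6)] h10_nn[OF assms(7)] h10_nn[OF assms(8)] h10_nn[OF assms(9)] h10_nn[OF assms(10)] by linarith
qed

lemma case_G:
  assumes k: "k \<in> {3,4,5,6}" and P2: "\<And>x y b1 b2 b3 b4 b5 b6 b7 b8. (x::real) \<ge> 36/13 \<Longrightarrow> y \<ge> 36/13 \<Longrightarrow> b1 \<ge> 0 \<Longrightarrow> b2 \<ge> 0 \<Longrightarrow> b3 \<ge> 0
       \<Longrightarrow> b4 \<ge> 0 \<Longrightarrow> b5 \<ge> 0 \<Longrightarrow> b6 \<ge> 0 \<Longrightarrow> b7 \<ge> 0 \<Longrightarrow> b8 \<ge> 0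
       \<Longrightarrow> x + y + b1 + b2 + b3 + b4 + b5 + b6 + b7 + b8 \<ge> 15
       \<Longrightarrow> x^k + y^k + b1^k + b2^k + b3^k + b4^k + b5^k + b6^k + b7^k + b8^k > 6 * 2^k + 3"
    and "config5 p" "normalized p" "minimizer (G k) p"
  shows "norm (p 4 - p 0) > 1/2 \<and> (\<forall>i\<in>{1,2,3}. norm (p 4 - p i) > 4 / sqrt 13)"
proof (rule core[where H = "\<lambda>a. a^k" and E = "6 * 2^k + 3" and f = "G k"])
  show "\<And>x y. norm x = 1 \<Longrightarrow> norm (y::real^3) = 1 \<Longrightarrow> G k (norm (x - y)) = (2 + 2 * (x \<bullet> y))^k"
    by (rule G_inner)
  have k1: "k \<ge> 1" using k by auto
  show "energy (G k) tbp \<le> 6 * 2^k + 3" using tbp_energy_G[OF k1] by simp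
  show "\<And>x b1 b2 b3 b4 b5 b6 b7 b8 b9. (x::real) \<ge> 15/4 \<Longrightarrow> b1 \<ge> 0 \<Longrightarrow> b2 \<ge> 0 \<Longrightarrow> b3 \<ge> 0
       \<Longrightarrow> b4 \<ge> 0 \<Longrightarrow> b5 \<ge> 0 \<Longrightarrow> b6 \<ge> 0 \<Longrightarrow> b7 \<ge> 0 \<Longrightarrow> b8 \<ge> 0 \<Longrightarrow> b9 \<ge> 0
       \<Longrightarrow> x^k + b1^k + b2^k + b3^k + b4^k + b5^k + b6^k + b7^k + b8^k + b9^k > 6 * 2^k + 3"
    by (rule P1_gen[OF k])
  show "\<And>x y b1 b2 b3 b4 b5 b6 b7 b8. (x::real) \<ge> 36/13 \<Longrightarrow> y \<ge> 36/13 \<Longrightarrow> b1 \<ge> 0 \<Longrightarrow> b2 \<ge> 0 \<Longrightarrow> b3 \<ge> 0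
       \<Longrightarrow> b4 \<ge> 0 \<Longrightarrow> b5 \<ge> 0 \<Longrightarrow> b6 \<ge> 0 \<Longrightarrow> b7 \<ge> 0 \<Longrightarrow> b8 \<ge> 0
       \<Longrightarrow> x + y + b1 + b2 + b3 + b4 + b5 + b6 + b7 + b8 \<ge> 15
       \<Longrightarrow> x^k + y^k + b1^k + b2^k + b3^k + b4^k + b5^k + b6^k + b7^k + b8^k > 6 * 2^k + 3"
    by (rule P2)
  show "config5 p" by (fact assms)
  show "normalized p" by (fact assms)
  show "minimizer (G k) p" by (fact assms)
qed

theorem lemma2p1:
  fixes f :: "real \<Rightarrow> real" and p :: "nat \<Rightarrow> real^3"
  assumes "f \<in> {G 3, G 4, G 5, G 6, G10sharp}"
    and "config5 p"
    and "\<forall>i<5. \<forall>j<5. i \<noteq> j \<longrightarrow> p i \<noteq> p j"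
    and "normalized p"
    and "minimizer f p"
  shows "norm (p 4 - p 0) > 1/2 \<and> (\<forall>i\<in>{1,2,3}. norm (p 4 - p i) > 4 / sqrt 13)"
proof -
  consider "f = G 3" | "f = G 4" | "f = G 5" | "f = G 6" | "f = G10sharp" using assms(1) by auto
  then show ?thesis
  proof cases
    case 1
    have m: "minimizer (G 3) p" using assms(5) 1 by simp
    have k: "(3::nat) \<in> {3,4,5,6}" by simp
    show ?thesis by (rule case_G[OF k P2_3 assms(2) assms(4) m])
  next
    case 2
    have k4: "(4::nat) \<in> {4,5,6}" by simp
    have m: "minimizer (G 4) p" using assms(5) 2 by simp
    have k: "(4::nat) \<in> {3,4,5,6}" by simp
    show ?thesis by (rule case_G[OF k P2_gen[OF k4] assms(2) assms(4) m])
  next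
    case 3
    have k5: "(5::nat) \<in> {4,5,6}" by simp
    have m: "minimizer (G 5) p" using assms(5) 3 by simp
    have k: "(5::nat) \<in> {3,4,5,6}" by simp
    show ?thesis by (rule case_G[OF k P2_gen[OF k5] assms(2) assms(4) m])
  next
    case 4
    have k6: "(6::nat) \<in> {4,5,6}" by simp
    have m: "minimizer (G 6) p" using assms(5) 4 by simp
    have k: "(6::nat) \<in> {3,4,5,6}" by simp
    show ?thesis by (rule case_G[OF k P2_gen[OF k6] assms(2) assms(4) m])
  next
    case 5
    show ?thesis
    proof (rule core[where H = h10 and E = 14361 and f = f])
      show "\<And>x y. norm x = 1 \<Longrightarrow> norm (y::real^3) = 1 \<Longrightarrow> f (norm (x - y)) = h10 (2 + 2 * (x \<bullet> y))"
      proof -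
        fix x y :: "real^3" assume a: "norm x = 1" "norm y = 1"
        show "f (norm (x - y)) = h10 (2 + 2 * (x \<bullet> y))"
          unfolding 5 G10sharp_def h10_def G_inner[OF a] ..
      qed
      show "energy f tbp \<le> 14361" using tbp_energy_G10 5 by simp
      show "\<And>x b1 b2 b3 b4 b5 b6 b7 b8 b9. x \<ge> 15/4 \<Longrightarrow> b1 \<ge> 0 \<Longrightarrow> b2 \<ge> 0 \<Longrightarrow> b3 \<ge> 0
       \<Longrightarrow> b4 \<ge> 0 \<Longrightarrow> b5 \<ge> 0 \<Longrightarrow> b6 \<ge> 0 \<Longrightarrow> b7 \<ge> 0 \<Longrightarrow> b8 \<ge> 0 \<Longrightarrow> b9 \<ge> 0
       \<Longrightarrow> h10 x + h10 b1 + h10 b2 + h10 b3 + h10 b4 + h10 b5 + h10 b6 + h10 b7 + h10 b8 + h10 b9 > 14361"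
        by (rule P1_10)
      show "\<And>x y b1 b2 b3 b4 b5 b6 b7 b8. x \<ge> 36/13 \<Longrightarrow> y \<ge> 36/13 \<Longrightarrow> b1 \<ge> 0 \<Longrightarrow> b2 \<ge> 0 \<Longrightarrow> b3 \<ge> 0
       \<Longrightarrow> b4 \<ge> 0 \<Longrightarrow> b5 \<ge> 0 \<Longrightarrow> b6 \<ge> 0 \<Longrightarrow> b7 \<ge> 0 \<Longrightarrow> b8 \<ge> 0
       \<Longrightarrow> x + y + b1 + b2 + b3 + b4 + b5 + b6 + b7 + b8 \<ge> 15
       \<Longrightarrow> h10 x + h10 y + h10 b1 + h10 b2 + h10 b3 + h10 b4 + h10 b5 + h10 b6 + h10 b7 + h10 b8 > 14361"
        by (rule P2_10)
      show "config5 p" by (fact assms)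
      show "normalized p" by (fact assms)
      show "minimizer f p" by (fact assms)
    qed
  qed
qed

end
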